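(* Let $0<p\le2$ and let $\phi$ be an Orlicz function with $\alpha_\phi>0$. If the Orlicz space $L_\phi$ has type $p$, then $\phi$ satisfies condition $\Delta^{*p}$.
   Context: $(\Omega,\Sigma,\mu)$ is one of: (A) a non-atomic measure space with $\mu(\Omega)=\infty$; (B) a non-atomic measure space with $\mu(\Omega)<\infty$; (C) $\mathbb{N}$ with counting measure. Growth conditions and indices are taken for all arguments in case (A), for large arguments in case (B), and for small arguments in case (C). An Orlicz function is $\phi:[0,\infty)\to[0,\infty)$ with $\phi(0)=0$, strictly increasing, continuous, $\lim_{u\to\infty}\phi(u)=\infty$. $\phi\in\Delta^{*p}$ means there exist $K>0$ (and $v\ge0$ in case (B), $v>0$ in case (C)) with $\phi(au)\ge Ka^p\phi(u)$ for all $a\ge1$ and all $u\ge0$ (A), $u\ge v$ (B), $au\le v$ (C). $\alpha_\phi=\sup\{r:\exists c>0$ (and $v$) with $\phi(au)\ge ca^r\phi(u)$ for all $a\ge1$ and $u\ge0$ (A), $u\ge v$ (B), $0<u\le au\le v$ (C)$\}$. $L_\phi$ is the set of measurable $f$ with $\int\phi(\lambda|f|)\,d\mu<\infty$ for some $\lambda>0$, quasi-normed by $\|f\|=\inf\{\varepsilon>0:\int\phi(|f|/\varepsilon)\,d\mu\le1\}$. With Rademacher functions $r_k(t)=\operatorname{sign}(\sin2^k\pi t)$, a quasi-Banach space $X$ has type $p$ if there is $K>0$ with $\int_0^1\|\sum_{k=1}^n r_k(t)x_k\|\,dt\le K(\sum_{k=1}^n\|x_k\|^p)^{1/p}$ for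 all $x_1,\dots,x_n\in X$. *)

theory Defs
  imports "HOL-Analysis.Analysis"
begin

text \<open>The three settings: (A) non-atomic, infinite measure (growth for all arguments);
 (B) non-atomic, finite measure (large arguments); (C) counting measure on the naturals
 (small arguments).\<close>
datatype setting = SA | SB | SC

definition nonatomic :: "'a measure \<Rightarrow> bool" where
  "nonatomic M \<longleftrightarrow> (\<forall>A\<in>sets M. 0 < emeasure M A \<longrightarrow>
      (\<exists>B\<in>sets M. B \<subseteq> A \<and> 0 < emeasure M B \<and> emeasure M B < emeasure M A))"

definition measure_setting :: "setting \<Rightarrow> 'a measure \<Rightarrow> bool" where
  "measure_setting s M = (case s of
      SA \<Rightarrow> nonatomic M \<and> emeasure M (space M) = \<infinity>
    | SB \<Rightarrow> nonatomic M \<and> 0 < emeasure M (space M) \<and> emeasure M (space M) < \<infinity>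
    | SC \<Rightarrow> (\<exists>f. bij_betw f (UNIV :: nat set) (space M)) \<and> M = count_space (space M))"

definition orlicz_function :: "(real \<Rightarrow> real) \<Rightarrow> bool" where
  "orlicz_function \<phi> \<longleftrightarrow> \<phi> 0 = 0 \<and> strict_mono_on {0..} \<phi> \<and> continuous_on {0..} \<phi>
     \<and> filterlim \<phi> at_top at_top"

definition Delta_star :: "setting \<Rightarrow> real \<Rightarrow> (real \<Rightarrow> real) \<Rightarrow> bool" where
  "Delta_star s p \<phi> = (\<exists>K>0. case s of
      SA \<Rightarrow> (\<forall>a\<ge>1. \<forall>u\<ge>0. \<phi> (a * u) \<ge> K * a powr p * \<phi> u)
    | SB \<Rightarrow> (\<exists>v\<ge>0. \<forall>a\<ge>1. \<forall>u\<ge>v. \<phi> (a * u) \<ge> K * a powr p * \<phi> u)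
    | SC \<Rightarrow> (\<exists>v>0. \<forall>a\<ge>1. \<forall>u\<ge>0. a * u \<le> v \<longrightarrow> \<phi> (a * u) \<ge> K * a powr p * \<phi> u))"

definition lower_growth :: "setting \<Rightarrow> (real \<Rightarrow> real) \<Rightarrow> real \<Rightarrow> bool" where
  "lower_growth s \<phi> r = (\<exists>c>0. case s of
      SA \<Rightarrow> (\<forall>a\<ge>1. \<forall>u\<ge>0. \<phi> (a * u) \<ge> c * a powr r * \<phi> u)
    | SB \<Rightarrow> (\<exists>v\<ge>0. \<forall>a\<ge>1. \<forall>u\<ge>v. \<phi> (a * u) \<ge> c * a powr r * \<phi> u)
    | SC \<Rightarrow> (\<exists>v>0. \<forall>a\<ge>1. \<forall>u. 0 < u \<and> a * u \<le> v \<longrightarrow> \<phi> (a * u) \<ge> c * a powr r * \<phi> u))"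

definition alpha_index :: "setting \<Rightarrow> (real \<Rightarrow> real) \<Rightarrow> ereal" where
  "alpha_index s \<phi> = Sup (ereal ` {r. lower_growth s \<phi> r})"

definition orlicz_space :: "(real \<Rightarrow> real) \<Rightarrow> 'a measure \<Rightarrow> ('a \<Rightarrow> real) set" where
  "orlicz_space \<phi> M = {f \<in> borel_measurable M.
      \<exists>l>0. (\<integral>\<^sup>+ x. ennreal (\<phi> (l * \<bar>f x\<bar>)) \<partial>M) < \<infinity>}"

definition orlicz_norm :: "(real \<Rightarrow> real) \<Rightarrow> 'a measure \<Rightarrow> ('a \<Rightarrow> real) \<Rightarrow> real" where
  "orlicz_norm \<phi> M f = Inf {\<epsilon>. \<epsilon> > 0 \<and> (\<integral>\<^sup>+ x. ennreal (\<phi> (\<bar>f x\<bar> / \<epsilon>)) \<partial>M) \<le> 1}"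

definition rademacher :: "nat \<Rightarrow> real \<Rightarrow> real" where
  "rademacher k t = sgn (sin (2 ^ k * pi * t))"

definition orlicz_has_type :: "real \<Rightarrow> (real \<Rightarrow> real) \<Rightarrow> 'a measure \<Rightarrow> bool" where
  "orlicz_has_type p \<phi> M \<longleftrightarrow> (\<exists>K>0. \<forall>n. \<forall>x :: nat \<Rightarrow> 'a \<Rightarrow> real.
      (\<forall>k\<in>{1..n}. x k \<in> orlicz_space \<phi> M) \<longrightarrow>
      (\<integral>\<^sup>+ t\<in>{0..1}. ennreal (orlicz_norm \<phi> M (\<lambda>\<omega>. \<Sum>k=1..n. rademacher k t * x k \<omega>)) \<partial>lborel)
        \<le> ennreal (K * (\<Sum>k=1..n. orlicz_norm \<phi> M (x k) powr p) powr (1 / p)))"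

end

theory Submission
  imports Defs
begin

lemma fin_eq: "emeasure M A < \<infinity> \<Longrightarrow> emeasure M A = ennreal (measure M A)"
  using emeasure_eq_ennreal_measure[of M A] by auto

lemma fin_pos: "emeasure M A < \<infinity> \<Longrightarrow> 0 < emeasure M A \<longleftrightarrow> 0 < measure M A"
  using fin_eq[of M A] by auto

lemma nonatomic_finite_sub:
  assumes na: "nonatomic M" and A: "A \<in> sets M" "0 < emeasure M A"
  shows "\<exists>B\<in>sets M. B \<subseteq> A \<and> 0 < emeasure M B \<and> emeasure M B < \<infinity>"
proof (cases "emeasure M A < \<infinity>")
  case True then show ?thesis using A by blast
next
  case False
  then obtain B where "B\<in>sets M" "B \<subseteq> A" "0 < emeasure M B" "emeasure M B < emeasure M A"
    using na A unfolding nonatomic_def by blast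
  moreover have "emeasure M A = \<infinity>" using False by (simp add: not_less top_unique)
  ultimately show ?thesis by auto
qed

lemma nonatomic_halving:
  assumes na: "nonatomic M" and B: "B \<in> sets M" "0 < emeasure M B" "emeasure M B < \<infinity>"
  shows "\<exists>C\<in>sets M. C \<subseteq> B \<and> 0 < measure M C \<and> measure M C * 2 ^ k \<le> measure M B"
proof (induction k)
  case 0
  have "measure M B > 0" using B fin_pos by blast
  then show ?case using B by auto
next
  case (Suc k)
  then obtain C where C: "C\<in>sets M" "C \<subseteq> B" "0 < measure M C" "measure M C * 2 ^ k \<le> measure M B"
    by blast
  have Cfin: "emeasure M C < \<infinity>" using C B by (meson emeasure_mono order.strict_trans1)
  have Cpos: "0 < emeasure M C" using C Cfin fin_pos by blast
  obtain D where D: "D\<in>sets M" "D \<subseteq> C" "0 < emeasure M D" "emeasure M D < emeasure M C"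
    using na C(1) Cpos unfolding nonatomic_def by blast
  have Dfin: "emeasure M D < \<infinity>" using D Cfin by auto
  have mD: "0 < measure M D" "measure M D < measure M C"
    using D Dfin Cfin fin_pos[of M D] fin_eq[of M D] fin_eq[of M C] by (auto simp: ennreal_less_iff)
  have p: "(0::real) < 2 ^ k" by simp
  show ?case
  proof (cases "measure M D * 2 \<le> measure M C")
    case True
    have "measure M D * 2 ^ Suc k = (measure M D * 2) * 2 ^ k" by simp
    also have "\<dots> \<le> measure M C * 2 ^ k" using True p by (intro mult_right_mono) auto
    finally have "measure M D * 2 ^ Suc k \<le> measure M B" using C(4) by linarith
    then show ?thesis using D C mD by blast
  next
    case False
    have e: "measure M (C - D) = measure M C - measure M D"
      using Cfin D C by (intro measure_Diff) auto
    have "measure M (C - D) * 2 ^ Suc k = (measure M (C - D) * 2) * 2 ^ k" by simp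
    also have "\<dots> \<le> measure M C * 2 ^ k" using False e p by (intro mult_right_mono) auto
    finally have "measure M (C - D) * 2 ^ Suc k \<le> measure M B" using C(4) by linarith
    moreover have "0 < measure M (C - D)" using e mD by linarith
    moreover have "C - D \<in> sets M" using C D by auto
    ultimately show ?thesis using C by blast
  qed
qed

lemma nonatomic_small:
  assumes na: "nonatomic M" and A: "A \<in> sets M" "0 < emeasure M A" and d: "d > 0"
  shows "\<exists>B\<in>sets M. B \<subseteq> A \<and> 0 < measure M B \<and> measure M B < d \<and> emeasure M B < \<infinity>"
proof -
  obtain B where B: "B\<in>sets M" "B \<subseteq> A" "0 < emeasure M B" "emeasure M B < \<infinity>"
    using nonatomic_finite_sub[OF na A] by blast
  obtain k where k: "measure M B / d < 2 ^ k"
    using real_arch_pow[of 2 "measure M B / d"] by auto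
  then have k': "measure M B < d * 2 ^ k" using d by (simp add: divide_less_eq mult.commute)
  obtain C where C: "C\<in>sets M" "C \<subseteq> B" "0 < measure M C" "measure M C * 2 ^ k \<le> measure M B"
    using nonatomic_halving[OF na B(1,3,4), of k] by blast
  have "measure M C * 2 ^ k < d * 2 ^ k" using C(4) k' by linarith
  then have "measure M C < d" by simp
  moreover have "emeasure M C < \<infinity>" using \<open>C \<subseteq> B\<close> B by (meson emeasure_mono order.strict_trans1)
  ultimately show ?thesis using B C by blast
qed

lemma nonatomic_exact:
  assumes na: "nonatomic M" and A: "A \<in> sets M" and c: "c \<ge> 0" "ennreal c \<le> emeasure M A"
  shows "\<exists>B\<in>sets M. B \<subseteq> A \<and> emeasure M B = ennreal c"
proof -
  define Sv where "Sv B = {measure M C | C. C \<in> sets M \<and> C \<subseteq> A - B \<and> measure M C \<le> c - measure M B \<and> emeasure M C < \<infinity>}" for B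
  define I where "I B \<longleftrightarrow> B \<in> sets M \<and> B \<subseteq> A \<and> emeasure M B < \<infinity> \<and> measure M B \<le> c" for B
  define P where "P B C \<longleftrightarrow> C \<in> sets M \<and> C \<subseteq> A - B \<and> measure M C \<le> c - measure M B \<and> emeasure M C < \<infinity> \<and> Sup (Sv B) \<le> 2 * measure M C" for B C
  have Sv_ne: "Sv B \<noteq> {}" if "I B" for B
  proof -
    have "0 \<in> Sv B" unfolding Sv_def using that unfolding I_def by (intro CollectI exI[of _ "{}"]) auto
    then show ?thesis by blast
  qed
  have Sv_bdd: "bdd_above (Sv B)" for B
    unfolding Sv_def by (rule bdd_aboveI[of _ "c - measure M B"]) auto
  have ex: "\<exists>C. P B C" if IB: "I B" for B
  proof (cases "Sup (Sv B) \<le> 0")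
    case True
    then show ?thesis unfolding P_def using that unfolding I_def by (intro exI[of _ "{}"]) auto
  next
    case False
    then have "Sup (Sv B) / 2 < Sup (Sv B)" by simp
    then obtain x where "x \<in> Sv B" "Sup (Sv B) / 2 < x"
      using less_cSup_iff[OF Sv_ne[OF IB] Sv_bdd] by blast
    then show ?thesis unfolding P_def Sv_def by auto
  qed
  define ch where "ch B = (SOME C. P B C)" for B
  have chP: "P B (ch B)" if "I B" for B unfolding ch_def using ex[OF that] by (rule someI_ex)
  define step where "step B = B \<union> ch B" for B
  have meas_step: "measure M (step B) = measure M B + measure M (ch B)" if "I B" for B
    using chP[OF that] that unfolding step_def P_def I_def
    by (intro measure_Union) auto
  have Istep: "I (step B)" if "I B" for B
  proof -
    have "emeasure M (step B) \<le> emeasure M B + emeasure M (ch B)"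
      unfolding step_def by (rule emeasure_subadditive) (use chP[OF that] that in \<open>auto simp: P_def I_def\<close>)
    also have "\<dots> < \<infinity>" using chP[OF that] that by (auto simp: P_def I_def)
    finally show ?thesis using chP[OF that] that meas_step[OF that] unfolding I_def P_def step_def by auto
  qed
  define Bs where "Bs j = (step ^^ j) {}" for j
  have BsS: "Bs (Suc j) = step (Bs j)" for j unfolding Bs_def by simp
  have IBs: "I (Bs j)" for j
  proof (induction j)
    case 0 then show ?case by (simp add: Bs_def I_def c)
  next
    case (Suc j) then show ?case unfolding BsS by (rule Istep)
  qed
  have inc: "incseq Bs" by (rule incseq_SucI) (auto simp: BsS step_def)
  have rng: "range Bs \<subseteq> sets M" using IBs by (auto simp: I_def)
  define U where "U = (\<Union>j. Bs j)"
  have U: "U \<in> sets M" "U \<subseteq> A" using rng IBs by (auto simp: U_def I_def)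
  have eU: "emeasure M U = (SUP j. emeasure M (Bs j))" unfolding U_def using SUP_emeasure_incseq[OF rng inc] by simp
  have "emeasure M (Bs j) \<le> ennreal c" for j
    using IBs[of j] fin_eq[of M "Bs j"] by (auto simp: I_def ennreal_leI)
  then have Ule: "emeasure M U \<le> ennreal c" unfolding eU by (rule SUP_least)
  have "emeasure M U = ennreal c"
  proof (rule ccontr)
    assume ne: "emeasure M U \<noteq> ennreal c"
    have Ufin: "emeasure M U < \<infinity>" by (rule le_less_trans[OF Ule]) simp
    have eUm: "emeasure M U = ennreal (measure M U)" using Ufin by (rule fin_eq)
    have mU: "measure M U < c" using ne Ule c(1) unfolding eUm by (auto simp: ennreal_le_iff)
    have "0 < emeasure M (A - U)"
    proof (rule ccontr)
      assume "\<not> 0 < emeasure M (A - U)"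
      then have z: "emeasure M (A - U) = 0" by (simp add: not_gr_zero)
      have "emeasure M A = emeasure M (U \<union> (A - U))" using U by (metis Diff_partition)
      also have "\<dots> = emeasure M U + emeasure M ((A - U) - U)" using U A by (intro emeasure_Un) auto
      also have "\<dots> = emeasure M U" using z by (simp add: Diff_idemp)
      finally have "ennreal c \<le> ennreal (measure M U)" using c(2) eUm by simp
      moreover have "ennreal (measure M U) < ennreal c" using mU measure_nonneg[of M U] by (intro ennreal_lessI) linarith+
      ultimately show False by (meson leD)
    qed
    then obtain D where D: "D \<in> sets M" "D \<subseteq> A - U" "0 < measure M D" "measure M D < c - measure M U" "emeasure M D < \<infinity>"
      using nonatomic_small[OF na _ _, of "A - U" "c - measure M U"] A U mU by auto
    have key: "measure M D \<le> 2 * measure M (ch (Bs j))" for j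
    proof -
      have "measure M (Bs j) \<le> measure M U"
      proof (rule measure_mono_fmeasurable)
        show "Bs j \<subseteq> U" by (auto simp: U_def)
        show "Bs j \<in> sets M" using rng by auto
        show "U \<in> fmeasurable M" using U(1) Ufin by (simp add: fmeasurable_def)
      qed
      moreover have "D \<subseteq> A - Bs j" using D(2) by (auto simp: U_def)
      ultimately have "measure M D \<in> Sv (Bs j)" unfolding Sv_def using D
        by (intro CollectI exI[of _ D]) auto
      then have "measure M D \<le> Sup (Sv (Bs j))" by (intro cSup_upper Sv_bdd)
      also have "\<dots> \<le> 2 * measure M (ch (Bs j))" using chP[OF IBs[of j]] by (simp add: P_def)
      finally show ?thesis .
    qed
    have grow: "real j * measure M D \<le> 2 * measure M (Bs j)" for j
    proof (induction j)
      case 0 then show ?case by (simp add: Bs_def)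
    next
      case (Suc j)
      then show ?case using key[of j] meas_step[OF IBs[of j]] by (simp add: BsS algebra_simps)
    qed
    obtain j where j: "2 * c / measure M D < real j" using reals_Archimedean2 by blast
    then have "2 * c < real j * measure M D" using D(3) by (simp add: divide_less_eq)
    moreover have "measure M (Bs j) \<le> c" using IBs[of j] by (simp add: I_def)
    ultimately show False using grow[of j] by linarith
  qed
  then show ?thesis using U by blast
qed

lemma phi_le_iff:
  assumes "orlicz_function \<phi>" "0 \<le> x" "0 \<le> y"
  shows "\<phi> x \<le> \<phi> y \<longleftrightarrow> x \<le> y"
  using assms strict_mono_on_less_eq[of "{0..}" \<phi> x y] by (auto simp: orlicz_function_def)

lemma phi_less_iff:
  assumes "orlicz_function \<phi>" "0 \<le> x" "0 \<le> y"
  shows "\<phi> x < \<phi> y \<longleftrightarrow> x < y"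
  using assms strict_mono_on_less[of "{0..}" \<phi> x y] by (auto simp: orlicz_function_def)

lemma phi_nonneg:
  assumes "orlicz_function \<phi>" "0 \<le> x" shows "0 \<le> \<phi> x"
  using phi_le_iff[OF assms(1) order_refl assms(2)] assms by (auto simp: orlicz_function_def)

lemma phi_pos:
  assumes "orlicz_function \<phi>" "0 < x" shows "0 < \<phi> x"
  using phi_less_iff[OF assms(1) order_refl, of x] assms by (auto simp: orlicz_function_def)

lemma phi_surj:
  assumes "orlicz_function \<phi>" "0 \<le> t"
  shows "\<exists>x\<ge>0. \<phi> x = t"
proof -
  have "eventually (\<lambda>x. t \<le> \<phi> x) at_top"
    using assms(1) unfolding orlicz_function_def by (auto simp: filterlim_at_top)
  then obtain b where b: "\<And>x. x \<ge> b \<Longrightarrow> t \<le> \<phi> x" by (auto simp: eventually_at_top_linorder)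
  have "t \<le> \<phi> (max b 0)" using b by simp
  moreover have "\<phi> 0 \<le> t" using assms by (simp add: orlicz_function_def)
  moreover have "continuous_on {0..max b 0} \<phi>"
    using assms(1) unfolding orlicz_function_def by (auto intro: continuous_on_subset)
  ultimately obtain x where "0 \<le> x" "\<phi> x = t"
    using IVT'[of \<phi> 0 t "max b 0"] by auto
  then show ?thesis by blast
qed

lemma orlicz_norm_ind:
  assumes phi: "orlicz_function \<phi>" and A: "A \<in> sets M" "emeasure M A = ennreal m" "m > 0"
    and w: "w > 0" "\<phi> w * m = 1" and c: "c > 0"
  shows "orlicz_norm \<phi> M (\<lambda>x. c * indicator A x) = c / w"
proof -
  have int: "(\<integral>\<^sup>+ x. ennreal (\<phi> (\<bar>c * indicator A x\<bar> / e)) \<partial>M) = ennreal (\<phi> (c / e) * m)"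
    if e: "e > 0" for e
  proof -
    have "(\<integral>\<^sup>+ x. ennreal (\<phi> (\<bar>c * indicator A x\<bar> / e)) \<partial>M) = (\<integral>\<^sup>+ x. ennreal (\<phi> (c / e)) * indicator A x \<partial>M)"
      using phi c by (intro nn_integral_cong) (auto simp: indicator_def orlicz_function_def)
    also have "\<dots> = ennreal (\<phi> (c / e)) * emeasure M A" using A by (simp add: nn_integral_cmult_indicator)
    also have "\<dots> = ennreal (\<phi> (c / e) * m)" using A phi_nonneg[OF phi, of "c/e"] c e
      by (simp add: ennreal_mult)
    finally show ?thesis .
  qed
  have "{e. e > 0 \<and> (\<integral>\<^sup>+ x. ennreal (\<phi> (\<bar>c * indicator A x\<bar> / e)) \<partial>M) \<le> 1} = {c / w..}"
  proof (intro set_eqI iffI)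
    fix e assume "e \<in> {e. e > 0 \<and> (\<integral>\<^sup>+ x. ennreal (\<phi> (\<bar>c * indicator A x\<bar> / e)) \<partial>M) \<le> 1}"
    then have e: "e > 0" and "ennreal (\<phi> (c / e) * m) \<le> 1" using int by auto
    then have "\<phi> (c / e) * m \<le> 1" by (simp add: ennreal_le_1)
    then have "\<phi> (c / e) * m \<le> \<phi> w * m" using w by simp
    then have "\<phi> (c / e) \<le> \<phi> w" using A(3) by (simp add: mult_le_cancel_right_pos)
    then have "c / e \<le> w" using phi_le_iff[OF phi, of "c/e" w] c e w by simp
    then show "e \<in> {c / w..}" using c e w by (simp add: field_simps)
  next
    fix e assume "e \<in> {c / w..}"
    then have e: "c / w \<le> e" by simp
    then have ep: "e > 0" using c w by (smt (verit) divide_pos_pos)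
    have "c / e \<le> w" using e ep w c by (simp add: field_simps)
    then have "\<phi> (c / e) \<le> \<phi> w" using phi_le_iff[OF phi, of "c/e" w] c ep w by simp
    then have "\<phi> (c / e) * m \<le> 1" using w A by (metis mult_right_mono less_imp_le)
    then show "e \<in> {e. e > 0 \<and> (\<integral>\<^sup>+ x. ennreal (\<phi> (\<bar>c * indicator A x\<bar> / e)) \<partial>M) \<le> 1}"
      using int[OF ep] ep by (simp add: ennreal_le_1)
  qed
  then show ?thesis unfolding orlicz_norm_def by simp
qed

lemma orlicz_space_ind:
  assumes phi: "orlicz_function \<phi>" and A: "A \<in> sets M" "emeasure M A < \<infinity>" and c: "c \<ge> 0"
  shows "(\<lambda>x. c * indicator A x) \<in> orlicz_space \<phi> M"
proof -
  have "(\<integral>\<^sup>+ x. ennreal (\<phi> (1 * \<bar>c * indicator A x\<bar>)) \<partial>M) = (\<integral>\<^sup>+ x. ennreal (\<phi> c) * indicator A x \<partial>M)"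
    using phi c by (intro nn_integral_cong) (auto simp: indicator_def orlicz_function_def)
  also have "\<dots> = ennreal (\<phi> c) * emeasure M A" using A by (simp add: nn_integral_cmult_indicator)
  also have "\<dots> < \<infinity>" using A by (simp add: ennreal_mult_less_top)
  finally show ?thesis unfolding orlicz_space_def using A by (auto intro!: exI[of _ 1])
qed

lemma rademacher_AE: "AE t in lborel. \<forall>k. \<bar>rademacher k t\<bar> = 1"
proof -
  define Z where "Z = {t::real. \<exists>k::nat. sin (2 ^ k * pi * t) = 0}"
  have "Z \<subseteq> (\<lambda>(k::nat, i::int). real_of_int i / 2 ^ k) ` UNIV"
  proof
    fix t assume "t \<in> Z"
    then obtain k where "sin (2 ^ k * pi * t) = 0" by (auto simp: Z_def)
    then obtain i :: int where "2 ^ k * pi * t = of_int i * pi" by (auto simp: sin_zero_iff_int2)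
    then have "t = real_of_int i / 2 ^ k" by (simp add: field_simps)
    then show "t \<in> (\<lambda>(k::nat, i::int). real_of_int i / 2 ^ k) ` UNIV" by force
  qed
  then have "countable Z" by (rule countable_subset) simp
  then have "Z \<in> null_sets lborel" by (rule countable_imp_null_set_lborel)
  then have "AE t in lborel. t \<notin> Z" by (rule AE_not_in)
  then show ?thesis
    by eventually_elim (auto simp: Z_def rademacher_def sgn_if)
qed

lemma sum_ind_abs:
  fixes n :: nat and w :: real
  assumes disj: "disjoint_family_on A {1..n}" and r: "\<forall>k. \<bar>r k\<bar> = (1::real)"
  shows "\<bar>\<Sum>k=1..n. r k * (w * indicator (A k) x)\<bar> = \<bar>w\<bar> * indicator (\<Union>k\<in>{1..n}. A k) x"
proof (cases "\<exists>j\<in>{1..n}. x \<in> A j")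
  case True
  then obtain j where j: "j \<in> {1..n}" "x \<in> A j" by blast
  have "(\<Sum>k=1..n. r k * (w * indicator (A k) x)) = r j * (w * indicator (A j) x) + (\<Sum>k\<in>{1..n} - {j}. r k * (w * indicator (A k) x))"
    by (rule sum.remove) (use j in auto)
  moreover have "x \<notin> A k" if "k \<in> {1..n} - {j}" for k
    using disj j that unfolding disjoint_family_on_def by blast
  ultimately have "(\<Sum>k=1..n. r k * (w * indicator (A k) x)) = r j * (w * indicator (A j) x)"
    by (simp add: indicator_def)
  then show ?thesis using j r by (auto simp: indicator_def abs_mult)
next
  case False
  then show ?thesis by (auto simp: indicator_def)
qed

lemma core:
  fixes M :: "'a measure"
  assumes phi: "orlicz_function \<phi>" and Kp: "K > 0"
    and H: "\<forall>n. \<forall>x :: nat \<Rightarrow> 'a \<Rightarrow> real.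
      (\<forall>k\<in>{1..n}. x k \<in> orlicz_space \<phi> M) \<longrightarrow>
      (\<integral>\<^sup>+ t\<in>{0..1}. ennreal (orlicz_norm \<phi> M (\<lambda>\<omega>. \<Sum>k=1..n. rademacher k t * x k \<omega>)) \<partial>lborel)
        \<le> ennreal (K * (\<Sum>k=1..n. orlicz_norm \<phi> M (x k) powr p) powr (1 / p))"
    and n: "n \<ge> 1" and m: "m > 0"
    and A: "\<And>k. k \<in> {1..n} \<Longrightarrow> A k \<in> sets M \<and> emeasure M (A k) = ennreal m"
    and disj: "disjoint_family_on A {1..n}"
    and w: "w > 0" "\<phi> w * m = 1" and w': "w' > 0" "\<phi> w' * (real n * m) = 1"
  shows "w / w' \<le> K * real n powr (1 / p)"
proof -
  define x where "x k = (\<lambda>\<omega>. w * indicator (A k) \<omega>)" for k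
  have xs: "\<forall>k\<in>{1..n}. x k \<in> orlicz_space \<phi> M"
    unfolding x_def using A w by (auto intro!: orlicz_space_ind[OF phi])
  have nx: "orlicz_norm \<phi> M (x k) = 1" if "k \<in> {1..n}" for k
    unfolding x_def using orlicz_norm_ind[OF phi conjunct1[OF A[OF that]] conjunct2[OF A[OF that]] m w w(1)] w by simp
  have rhs: "(\<Sum>k=1..n. orlicz_norm \<phi> M (x k) powr p) = real n"
    using nx by simp
  define U where "U = (\<Union>k\<in>{1..n}. A k)"
  have U: "U \<in> sets M" using A by (auto simp: U_def)
  have "emeasure M U = (\<Sum>k\<in>{1..n}. emeasure M (A k))"
    unfolding U_def using A disj by (intro sum_emeasure[symmetric]) auto
  also have "\<dots> = (\<Sum>k\<in>{1..n}. ennreal m)" using A by (intro sum.cong) auto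
  also have "\<dots> = ennreal (real n * m)" using m by (simp add: ennreal_of_nat_eq_real_of_nat ennreal_mult)
  finally have eU: "emeasure M U = ennreal (real n * m)" .
  have nU: "orlicz_norm \<phi> M (\<lambda>\<omega>. w * indicator U \<omega>) = w / w'"
    using orlicz_norm_ind[OF phi U eU _ w' w(1)] m n by simp
  have "AE t in lborel. ennreal (orlicz_norm \<phi> M (\<lambda>\<omega>. \<Sum>k=1..n. rademacher k t * x k \<omega>)) * indicator {0..1} t
      = ennreal (w / w') * indicator {0..1} t"
    using rademacher_AE
  proof eventually_elim
    case (elim t)
    have "orlicz_norm \<phi> M (\<lambda>\<omega>. \<Sum>k=1..n. rademacher k t * x k \<omega>) = orlicz_norm \<phi> M (\<lambda>\<omega>. w * indicator U \<omega>)"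
      unfolding orlicz_norm_def x_def U_def using sum_ind_abs[OF disj elim, of w] w by simp
    then show ?case using nU by simp
  qed
  then have "(\<integral>\<^sup>+ t\<in>{0..1}. ennreal (orlicz_norm \<phi> M (\<lambda>\<omega>. \<Sum>k=1..n. rademacher k t * x k \<omega>)) \<partial>lborel)
      = (\<integral>\<^sup>+ t. ennreal (w / w') * indicator {0..1::real} t \<partial>lborel)"
    by (rule nn_integral_cong_AE)
  also have "\<dots> = ennreal (w / w')" by (simp add: nn_integral_cmult_indicator)
  finally have "ennreal (w / w') \<le> ennreal (K * real n powr (1 / p))"
    using H[THEN spec, THEN spec, of n x] xs rhs by simp
  then show ?thesis using Kp by (simp add: ennreal_le_iff)
qed

lemma nonatomic_disjoint:
  assumes na: "nonatomic M" and m: "m > 0" and tot: "ennreal (real n * m) \<le> emeasure M (space M)"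
  shows "\<exists>A. (\<forall>k\<in>{1..n}. A k \<in> sets M \<and> emeasure M (A k) = ennreal m) \<and> disjoint_family_on A {1..n}"
  using tot
proof (induction n)
  case 0
  then show ?case by (auto simp: disjoint_family_on_def)
next
  case (Suc n)
  have "ennreal (real n * m) \<le> ennreal (real (Suc n) * m)" using m by (intro ennreal_leI) auto
  then obtain A where A: "\<forall>k\<in>{1..n}. A k \<in> sets M \<and> emeasure M (A k) = ennreal m" "disjoint_family_on A {1..n}"
    using Suc by (meson order.trans)
  define V where "V = (\<Union>k\<in>{1..n}. A k)"
  have V: "V \<in> sets M" using A by (auto simp: V_def)
  have "emeasure M V = (\<Sum>k\<in>{1..n}. emeasure M (A k))"
    unfolding V_def using A by (intro sum_emeasure[symmetric]) auto
  also have "\<dots> = (\<Sum>k\<in>{1..n}. ennreal m)" using A by (intro sum.cong) auto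
  also have "\<dots> = ennreal (real n * m)" using m by (simp add: ennreal_of_nat_eq_real_of_nat ennreal_mult)
  finally have eV: "emeasure M V = ennreal (real n * m)" .
  define R where "R = space M - V"
  have R: "R \<in> sets M" using V by (auto simp: R_def)
  have "emeasure M (space M) \<le> emeasure M V + emeasure M R"
  proof -
    have "space M = V \<union> R" using V sets.sets_into_space by (auto simp: R_def)
    then show ?thesis using emeasure_subadditive[OF V R] by simp
  qed
  moreover have "ennreal (real (Suc n) * m) = ennreal (real n * m) + ennreal m"
    using m by (simp add: distrib_right ennreal_plus[symmetric] del: ennreal_plus)
  ultimately have "ennreal (real n * m) + ennreal m \<le> ennreal (real n * m) + emeasure M R"
    using Suc.prems eV by (metis order.trans)
  then have "ennreal m \<le> emeasure M R" by (simp add: ennreal_add_left_cancel_le)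
  then obtain B where B: "B \<in> sets M" "B \<subseteq> R" "emeasure M B = ennreal m"
    using nonatomic_exact[OF na R, of m] m by auto
  define A' where "A' = A(Suc n := B)"
  have "\<forall>k\<in>{1..Suc n}. A' k \<in> sets M \<and> emeasure M (A' k) = ennreal m"
    using A B by (auto simp: A'_def)
  moreover have "disjoint_family_on A' {1..Suc n}"
  proof -
    have "A' k \<inter> A' j = {}" if "k \<in> {1..Suc n}" "j \<in> {1..Suc n}" "k \<noteq> j" for k j
    proof (cases "k = Suc n \<or> j = Suc n")
      case True
      then show ?thesis using that B(2) by (auto simp: A'_def R_def V_def)
    next
      case False
      then show ?thesis using that A(2) by (auto simp: A'_def disjoint_family_on_def)
    qed
    then show ?thesis unfolding disjoint_family_on_def by blast
  qed
  ultimately show ?case by blast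
qed

lemma countable_disjoint:
  fixes n :: nat
  assumes f: "bij_betw f (UNIV :: nat set) S" and m: "m \<ge> (1::nat)"
  shows "\<exists>A. (\<forall>k\<in>{1..n}. A k \<in> sets (count_space S) \<and> emeasure (count_space S) (A k) = ennreal (real m))
     \<and> disjoint_family_on A {1..n}"
proof -
  define A where "A k = f ` {k * m ..< k * m + m}" for k
  have inj: "inj f" using f by (simp add: bij_betw_def)
  have sub: "A k \<subseteq> S" for k using f by (auto simp: A_def bij_betw_def)
  have card: "card (A k) = m" for k
    unfolding A_def using inj by (simp add: card_image inj_on_subset[OF inj])
  have "emeasure (count_space S) (A k) = ennreal (real m)" for k
    using sub card by (simp add: A_def ennreal_of_nat_eq_real_of_nat)
  moreover have "disjoint_family_on A {1..n}"
  proof -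
    have "A k \<inter> A j = {}" if "k \<noteq> j" for k j
    proof -
      have "{k * m ..< k * m + m} \<inter> {j * m ..< j * m + m} = {}"
      proof (cases "k < j")
        case True
        then have "k * m + m \<le> j * m" using m
          by (metis add.commute mult_Suc Suc_leI mult_le_mono1)
        then show ?thesis by auto
      next
        case False
        then have "j * m + m \<le> k * m" using m that
          by (metis add.commute mult_Suc Suc_leI mult_le_mono1 linorder_neqE_nat)
        then show ?thesis by auto
      qed
      then show ?thesis unfolding A_def image_Int[OF inj, symmetric] by simp
    qed
    then show ?thesis unfolding disjoint_family_on_def by blast
  qed
  ultimately show ?thesis using sub by (intro exI[of _ A]) auto
qed

lemma floor_half:
  assumes "x \<ge> (1::real)"
  shows "real (nat \<lfloor>x\<rfloor>) \<ge> x / 2" "real (nat \<lfloor>x\<rfloor>) \<le> x" "nat \<lfloor>x\<rfloor> \<ge> 1"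
proof -
  have f: "real_of_int \<lfloor>x\<rfloor> > x - 1" "real_of_int \<lfloor>x\<rfloor> \<le> x" by linarith+
  have f1: "\<lfloor>x\<rfloor> \<ge> 1" using assms by linarith
  then have e: "real (nat \<lfloor>x\<rfloor>) = real_of_int \<lfloor>x\<rfloor>" by simp
  show "real (nat \<lfloor>x\<rfloor>) \<ge> x / 2" unfolding e using f f1 assms by linarith
  show "real (nat \<lfloor>x\<rfloor>) \<le> x" unfolding e using f by linarith
  show "nat \<lfloor>x\<rfloor> \<ge> 1" using f1 by linarith
qed

lemma powr_inv_bound:
  assumes p: "p > 0" and K: "K > 0" and a: "a \<ge> 0" and n: "real n \<le> (a / K) powr p"
  shows "K * real n powr (1 / p) \<le> a"
proof -
  have "real n powr (1 / p) \<le> ((a / K) powr p) powr (1 / p)"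
    using n p by (intro powr_mono2) auto
  also have "\<dots> = a / K" using p a K by (simp add: powr_powr)
  finally show ?thesis using K by (simp add: field_simps)
qed

lemma growth_AB:
  assumes phi: "orlicz_function \<phi>" and Kp: "K > 0" and p: "p > 0"
    and y: "y > 0" and a: "a \<ge> 1"
    and G: "\<And>n. n \<ge> 1 \<Longrightarrow> \<exists>w\<ge>0. \<phi> w = real n * \<phi> y \<and> w \<le> K * real n powr (1/p) * y"
  shows "\<phi> (a * y) \<ge> 1 / (2 * K powr p) * a powr p * \<phi> y"
proof -
  define x where "x = (a / K) powr p"
  have xe: "1 / (2 * K powr p) * a powr p = x / 2" unfolding x_def using Kp a
    by (simp add: powr_divide)
  have py: "\<phi> y > 0" using phi_pos[OF phi y] .
  have ay: "\<phi> y \<le> \<phi> (a * y)" using phi_le_iff[OF phi, of y "a*y"] y a by (simp add: mult_le_cancel_right1)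
  have "x / 2 * \<phi> y \<le> \<phi> (a * y)"
  proof (cases "x < 1")
    case True
    then have "x / 2 * \<phi> y \<le> \<phi> y" using py by (simp add: mult_le_cancel_right1)
    then show ?thesis using ay by linarith
  next
    case False
    define n where "n = nat \<lfloor>x\<rfloor>"
    have n: "real n \<ge> x / 2" "real n \<le> x" "n \<ge> 1" using floor_half[of x] False by (auto simp: n_def)
    obtain w where w: "w \<ge> 0" "\<phi> w = real n * \<phi> y" "w \<le> K * real n powr (1/p) * y" using G[OF n(3)] by blast
    have "K * real n powr (1/p) \<le> a" using powr_inv_bound[OF p Kp _ n(2)[unfolded x_def]] a by simp
    then have "w \<le> a * y" using w(3) y by (smt (verit) mult_right_mono)
    then have "\<phi> w \<le> \<phi> (a * y)" using phi_le_iff[OF phi w(1), of "a*y"] y a by simp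
    moreover have "x / 2 * \<phi> y \<le> real n * \<phi> y" using n py by (intro mult_right_mono) auto
    ultimately show ?thesis using w(2) by linarith
  qed
  then show ?thesis by (subst xe)
qed

lemma phi_surj_pos:
  assumes phi: "orlicz_function \<phi>" and t: "t > 0"
  shows "\<exists>y>0. \<phi> y = t"
proof -
  obtain y where "y \<ge> 0" "\<phi> y = t" using phi_surj[OF phi, of t] t by auto
  moreover have "y \<noteq> 0" using calculation t phi by (auto simp: orlicz_function_def)
  ultimately show ?thesis by (intro exI[of _ y]) auto
qed

lemma growth_C:
  assumes phi: "orlicz_function \<phi>" and Kp: "K > 0" and p: "p > 0"
    and v: "v > 0" "\<phi> v = 1" and u: "u > 0" and a: "a \<ge> 1" and au: "a * u \<le> v"
    and G: "\<And>m n z y. m \<ge> 1 \<Longrightarrow> n \<ge> 1 \<Longrightarrow> z \<ge> 0 \<Longrightarrow> y > 0 \<Longrightarrow> \<phi> z = 1 / real m \<Longrightarrow>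
              \<phi> y = 1 / (real n * real m) \<Longrightarrow> z \<le> K * real n powr (1/p) * y"
  shows "\<phi> (a * u) \<ge> 1 / (8 * K powr p) * a powr p * \<phi> u"
proof -
  define x where "x = (a / K) powr p"
  have xe: "1 / (8 * K powr p) * a powr p = x / 8" unfolding x_def using Kp a
    by (simp add: powr_divide)
  have pu: "\<phi> u > 0" using phi_pos[OF phi u] .
  have ay: "\<phi> u \<le> \<phi> (a * u)" using phi_le_iff[OF phi, of u "a*u"] u a by (simp add: mult_le_cancel_right1)
  have "\<phi> (a * u) \<le> \<phi> v" using phi_le_iff[OF phi, of "a*u" v] u a au v by simp
  then have pu1: "\<phi> u \<le> 1" using ay v by linarith
  define M where "M = nat \<lceil>1 / \<phi> u\<rceil>"
  have M1: "real M \<ge> 1 / \<phi> u" unfolding M_def by linarith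
  have M2: "real M \<le> 2 / \<phi> u"
  proof -
    have "1 / \<phi> u \<ge> 1" using pu pu1 by (simp add: field_simps)
    then have "real M \<le> 1 / \<phi> u + 1" unfolding M_def by linarith
    then show ?thesis using \<open>1 / \<phi> u \<ge> 1\<close> by linarith
  qed
  have iu: "1 / \<phi> u \<ge> 1" using pu pu1 by (simp add: field_simps)
  then have "real M \<ge> 1" using M1 by linarith
  then have M0: "M \<ge> 1" by simp
  have invM: "1 / real M \<le> \<phi> u" using M1 pu M0 by (simp add: field_simps)
  have le_u: "y \<le> u" if "y > 0" "\<phi> y \<le> \<phi> u" for y
    using phi_le_iff[OF phi, of y u] that u by simp
  have "x / 8 * \<phi> u \<le> \<phi> (a * u)"
  proof (cases "x < 1")
    case True
    then have "x / 8 * \<phi> u \<le> \<phi> u" using pu by (simp add: mult_le_cancel_right1)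
    then show ?thesis using ay by linarith
  next
    case False
    define n where "n = nat \<lfloor>x\<rfloor>"
    have n: "real n \<ge> x / 2" "real n \<le> x" "n \<ge> 1" using floor_half[of x] False by (auto simp: n_def)
    have nM: "n \<le> M"
    proof (rule ccontr)
      assume "\<not> n \<le> M"
      then have Mn: "real M < real n" by simp
      obtain y' where y': "y' > 0" "\<phi> y' = 1 / (real M * real (1::nat))"
        using phi_surj_pos[OF phi, of "1 / (real M * real (1::nat))"] M0 by auto
      have "v \<le> K * real M powr (1/p) * y'" using G[of 1 M v y'] M0 y' v by simp
      moreover have "y' \<le> u" using le_u[OF y'(1)] y'(2) invM by simp
      ultimately have "v \<le> K * real M powr (1/p) * u"
        using Kp by (smt (verit) mult_left_mono powr_ge_zero mult_nonneg_nonneg)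
      then have "a * u \<le> K * real M powr (1/p) * u" using au by linarith
      then have "a \<le> K * real M powr (1/p)" using u by simp
      then have "a / K \<le> real M powr (1/p)" using Kp by (simp add: field_simps)
      then have "x \<le> (real M powr (1/p)) powr p" unfolding x_def using a Kp p by (intro powr_mono2) auto
      also have "\<dots> = real M" using p by (simp add: powr_powr)
      finally show False using n Mn by linarith
    qed
    define m where "m = nat \<lceil>real M / real n\<rceil>"
    have m1: "real m \<ge> real M / real n" unfolding m_def by linarith
    have MnM: "real M / real n \<ge> 1" using nM n(3) by (simp add: field_simps)
    have m2: "real m \<le> 2 * real M / real n"
    proof -
      have "real m \<le> real M / real n + 1" unfolding m_def using MnM by linarith
      moreover have "2 * real M / real n = real M / real n + real M / real n" by simp
      ultimately show ?thesis using MnM by linarith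
    qed
    have m0: "m \<ge> 1" using m1 MnM by linarith
    have nm: "real n * real m \<ge> real M" using m1 n(3) by (simp add: field_simps)
    obtain y' where y': "y' > 0" "\<phi> y' = 1 / (real n * real m)"
      using phi_surj_pos[OF phi, of "1 / (real n * real m)"] m0 n(3) by auto
    obtain z where z: "z > 0" "\<phi> z = 1 / real m"
      using phi_surj_pos[OF phi, of "1 / real m"] m0 by auto
    have "1 / (real n * real m) \<le> 1 / real M" using nm M0 by (intro divide_left_mono) auto
    then have "y' \<le> u" using le_u[OF y'(1)] y'(2) invM by simp
    have "z \<le> K * real n powr (1/p) * y'" using G[of m n z y'] m0 n(3) y' z by simp
    also have "\<dots> \<le> K * real n powr (1/p) * u" using \<open>y' \<le> u\<close> Kp by (intro mult_left_mono) auto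
    also have "\<dots> \<le> a * u" using powr_inv_bound[OF p Kp _ n(2)[unfolded x_def]] a u by (intro mult_right_mono) auto
    finally have "\<phi> z \<le> \<phi> (a * u)" using phi_le_iff[OF phi, of z "a*u"] z u a by simp
    moreover have "real n / (2 * real M) \<le> 1 / real m"
      using m2 m0 n(3) M0 by (simp add: field_simps)
    moreover have "real n * \<phi> u / 4 \<le> real n / (2 * real M)"
      using M2 M0 pu n(3) by (simp add: field_simps)
    moreover have "x / 8 * \<phi> u \<le> real n * \<phi> u / 4" using n pu by (simp add: field_simps)
    ultimately show ?thesis using z by linarith
  qed
  then show ?thesis by (subst xe)
qed

theorem mainTheorem8:
  fixes M :: "'a measure" and \<phi> :: "real \<Rightarrow> real" and p :: real and s :: setting
  assumes "measure_setting s M"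
    and "0 < p" and "p \<le> 2"
    and "orlicz_function \<phi>"
    and "alpha_index s \<phi> > 0"
    and "orlicz_has_type p \<phi> M"
  shows "Delta_star s p \<phi>"
proof -
  note phi = assms(4) and p = assms(2)
  obtain K where Kp: "K > 0" and H: "\<forall>n. \<forall>x :: nat \<Rightarrow> 'a \<Rightarrow> real.
      (\<forall>k\<in>{1..n}. x k \<in> orlicz_space \<phi> M) \<longrightarrow>
      (\<integral>\<^sup>+ t\<in>{0..1}. ennreal (orlicz_norm \<phi> M (\<lambda>\<omega>. \<Sum>k=1..n. rademacher k t * x k \<omega>)) \<partial>lborel)
        \<le> ennreal (K * (\<Sum>k=1..n. orlicz_norm \<phi> M (x k) powr p) powr (1 / p))"
    using assms(6) unfolding orlicz_has_type_def by blast
  have phi0: "\<phi> 0 = 0" using phi by (simp add: orlicz_function_def)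
  have GAB: "\<exists>w\<ge>0. \<phi> w = real n * \<phi> y \<and> w \<le> K * real n powr (1/p) * y"
    if na: "nonatomic M" and y: "y > 0" and n: "n \<ge> 1"
      and tot: "ennreal (1 / \<phi> y) \<le> emeasure M (space M)" for y n
  proof -
    have py: "\<phi> y > 0" using phi_pos[OF phi y] .
    obtain w where w: "w > 0" "\<phi> w = real n * \<phi> y"
      using phi_surj_pos[OF phi, of "real n * \<phi> y"] py n by auto
    define m where "m = 1 / (real n * \<phi> y)"
    have m: "m > 0" using py n by (simp add: m_def)
    have nm: "real n * m = 1 / \<phi> y" using n py by (simp add: m_def)
    obtain A where A: "\<forall>k\<in>{1..n}. A k \<in> sets M \<and> emeasure M (A k) = ennreal m" "disjoint_family_on A {1..n}"
      using nonatomic_disjoint[OF na m, of n] tot nm by auto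
    have "w / y \<le> K * real n powr (1/p)"
    proof (rule core[OF phi Kp H n m _ A(2) w(1) _ y])
      show "A k \<in> sets M \<and> emeasure M (A k) = ennreal m" if "k \<in> {1..n}" for k using A(1) that by blast
      show "\<phi> w * m = 1" using w py n by (simp add: m_def)
      show "\<phi> y * (real n * m) = 1" using nm py by simp
    qed
    then have "w \<le> K * real n powr (1/p) * y" using y by (simp add: field_simps)
    then show ?thesis using w by (intro exI[of _ w]) auto
  qed
  show ?thesis
  proof (cases s)
    case SA
    then have na: "nonatomic M" and inf: "emeasure M (space M) = \<infinity>"
      using assms(1) by (auto simp: measure_setting_def)
    have "\<phi> (a * u) \<ge> 1 / (2 * K powr p) * a powr p * \<phi> u" if a: "a \<ge> 1" and u: "u \<ge> 0" for a u
    proof (cases "u = 0")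
      case True then show ?thesis using phi0 by simp
    next
      case False
      then have u: "u > 0" using u by simp
      show ?thesis
        by (rule growth_AB[OF phi Kp p u a]) (rule GAB[OF na u], auto simp: inf)
    qed
    then show ?thesis unfolding Delta_star_def using SA Kp by (intro exI[of _ "1 / (2 * K powr p)"]) auto
  next
    case SB
    then have na: "nonatomic M" and fin: "0 < emeasure M (space M)" "emeasure M (space M) < \<infinity>"
      using assms(1) by (auto simp: measure_setting_def)
    define r where "r = measure M (space M)"
    have er: "emeasure M (space M) = ennreal r" unfolding r_def using fin(2) by (rule fin_eq)
    have r: "r > 0" using fin fin_pos r_def by blast
    obtain v where v: "v > 0" "\<phi> v = 1 / r" using phi_surj_pos[OF phi, of "1 / r"] r by auto
    have "\<phi> (a * u) \<ge> 1 / (2 * K powr p) * a powr p * \<phi> u" if a: "a \<ge> 1" and u: "u \<ge> v" for a u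
    proof -
      have u0: "u > 0" using u v by linarith
      have "\<phi> v \<le> \<phi> u" using phi_le_iff[OF phi, of v u] u v by simp
      then have "1 / \<phi> u \<le> r" using v r phi_pos[OF phi u0] by (simp add: field_simps)
      then have tot: "ennreal (1 / \<phi> u) \<le> emeasure M (space M)" unfolding er by (rule ennreal_leI)
      show ?thesis
        by (rule growth_AB[OF phi Kp p u0 a]) (rule GAB[OF na u0 _ tot])
    qed
    then show ?thesis unfolding Delta_star_def using SB Kp v
      by (intro exI[of _ "1 / (2 * K powr p)"]) (auto intro!: exI[of _ v])
  next
    case SC
    then obtain f where f: "bij_betw f (UNIV :: nat set) (space M)" and Mc: "M = count_space (space M)"
      using assms(1) by (auto simp: measure_setting_def)
    obtain v where v: "v > 0" "\<phi> v = 1" using phi_surj_pos[OF phi, of 1] by auto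
    have G: "z \<le> K * real n powr (1/p) * y"
      if m: "m \<ge> 1" and n: "n \<ge> 1" and z: "z \<ge> 0" and y: "y > 0" and pz: "\<phi> z = 1 / real m"
        and py: "\<phi> y = 1 / (real n * real m)" for m n z y
    proof -
      obtain A where A: "\<forall>k\<in>{1..n}. A k \<in> sets (count_space (space M)) \<and> emeasure (count_space (space M)) (A k) = ennreal (real m)"
        "disjoint_family_on A {1..n}"
        using countable_disjoint[OF f m, of n] by blast
      have z0: "z > 0" using z pz phi0 m by (cases "z = 0") auto
      have "z / y \<le> K * real n powr (1/p)"
      proof (rule core[OF phi Kp H n _ _ A(2) z0 _ y])
        show "real m > 0" using m by simp
        show "A k \<in> sets M \<and> emeasure M (A k) = ennreal (real m)" if "k \<in> {1..n}" for k
          using A(1) that Mc by (metis)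
        show "\<phi> z * real m = 1" using pz m by simp
        show "\<phi> y * (real n * real m) = 1" using py m n by simp
      qed
      then show ?thesis using y by (simp add: field_simps)
    qed
    have "\<phi> (a * u) \<ge> 1 / (8 * K powr p) * a powr p * \<phi> u" if a: "a \<ge> 1" and u: "u \<ge> 0" and au: "a * u \<le> v" for a u
    proof (cases "u = 0")
      case True then show ?thesis using phi0 by simp
    next
      case False
      then have u: "u > 0" using u by simp
      show ?thesis by (rule growth_C[OF phi Kp p v u a au G])
    qed
    then show ?thesis unfolding Delta_star_def using SC Kp v
      by (intro exI[of _ "1 / (8 * K powr p)"]) (auto intro!: exI[of _ v])
  qed
qed

end
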